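(* Let $G$ be an undirected graph, let $s,\Delta_s$ be positive integers, and let $D\subset V(G)$ be a subset of vertices. If there exists an $(s,\Delta_s)$-dissolution $(D,z)$ for $G$ (with this set $D$), then such a dissolution can be found by computing a maximum flow in a flow network with $|V(G)|+2$ nodes and $|E(G)|+2|V(G)|$ arcs in which every arc capacity is either $s$ or $\Delta_s$.
   Context: For $V'\subseteq V(G)$ let $Z(V',G):=\{(x,y)\mid x\in V',\ y\in V(G)\setminus V',\ \{x,y\}\in E(G)\}$. For positive integers $s,\Delta_s$, an $(s,\Delta_s)$-dissolution for $G$ is a pair $(D,z)$ with $D\subset V(G)$ and $z\colon Z(D,G)\to\{0,\dots,s\}$ such that (a) for every $v'\in D$: $\sum_{(v',v)\in Z(D,G)} z(v',v)=s$, and (b) for every $v\in V(G)\setminus D$: $\sum_{(v',v)\in Z(D,G)} z(v',v)=\Delta_s$. *)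

theory Defs
  imports Main
begin

definition ugraph :: "'a set \<Rightarrow> 'a set set \<Rightarrow> bool" where
  "ugraph V E \<longleftrightarrow> finite V \<and> (\<forall>e\<in>E. \<exists>x y. x \<in> V \<and> y \<in> V \<and> x \<noteq> y \<and> e = {x, y})"

definition Zset :: "'a set \<Rightarrow> 'a set \<Rightarrow> 'a set set \<Rightarrow> ('a \<times> 'a) set" where
  "Zset D V E = {(x, y). x \<in> D \<and> y \<in> V - D \<and> {x, y} \<in> E}"

text \<open>(D,z) is an (s,Delta_s)-dissolution for G = (V,E). The map z is only
  relevant on Z(D,G); there it takes values in {0..s}.\<close>
definition is_dissolution ::
  "'a set \<Rightarrow> 'a set set \<Rightarrow> nat \<Rightarrow> nat \<Rightarrow> 'a set \<Rightarrow> ('a \<times> 'a \<Rightarrow> nat) \<Rightarrow> bool" where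
  "is_dissolution V E s \<Delta> D z \<longleftrightarrow>
     D \<subset> V \<and>
     (\<forall>p\<in>Zset D V E. z p \<le> s) \<and>
     (\<forall>v'\<in>D. (\<Sum>p\<in>{p\<in>Zset D V E. fst p = v'}. z p) = s) \<and>
     (\<forall>v\<in>V - D. (\<Sum>p\<in>{p\<in>Zset D V E. snd p = v}. z p) = \<Delta>)"

datatype 'a fnode = Src | Snk | Vx 'a

definition net_nodes :: "'a set \<Rightarrow> 'a fnode set" where
  "net_nodes V = {Src, Snk} \<union> Vx ` V"

text \<open>Capacities of the dissolution network (0 = no arc).\<close>
fun net_cap :: "'a set \<Rightarrow> 'a set set \<Rightarrow> nat \<Rightarrow> nat \<Rightarrow> 'a set \<Rightarrow> 'a fnode \<Rightarrow> 'a fnode \<Rightarrow> nat" where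
  "net_cap V E s \<Delta> D Src (Vx v) = (if v \<in> D then s else 0)"
| "net_cap V E s \<Delta> D (Vx v) Snk = (if v \<in> V - D then \<Delta> else 0)"
| "net_cap V E s \<Delta> D (Vx x) (Vx y) = (if (x, y) \<in> Zset D V E then s else 0)"
| "net_cap V E s \<Delta> D _ _ = 0"

definition net_arcs :: "'a set \<Rightarrow> 'a set set \<Rightarrow> nat \<Rightarrow> nat \<Rightarrow> 'a set \<Rightarrow> ('a fnode \<times> 'a fnode) set" where
  "net_arcs V E s \<Delta> D = {(a, b). a \<in> net_nodes V \<and> b \<in> net_nodes V \<and> 0 < net_cap V E s \<Delta> D a b}"

definition is_flow :: "'n set \<Rightarrow> 'n \<Rightarrow> 'n \<Rightarrow> ('n \<Rightarrow> 'n \<Rightarrow> nat) \<Rightarrow> ('n \<Rightarrow> 'n \<Rightarrow> nat) \<Rightarrow> bool" where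
  "is_flow N src snk c f \<longleftrightarrow>
     (\<forall>a b. f a b \<le> c a b) \<and>
     (\<forall>a b. (a \<notin> N \<or> b \<notin> N) \<longrightarrow> f a b = 0) \<and>
     (\<forall>v\<in>N - {src, snk}. (\<Sum>u\<in>N. f u v) = (\<Sum>w\<in>N. f v w))"

definition flow_value :: "'n set \<Rightarrow> 'n \<Rightarrow> ('n \<Rightarrow> 'n \<Rightarrow> nat) \<Rightarrow> int" where
  "flow_value N src f = int (\<Sum>w\<in>N. f src w) - int (\<Sum>u\<in>N. f u src)"

definition is_max_flow :: "'n set \<Rightarrow> 'n \<Rightarrow> 'n \<Rightarrow> ('n \<Rightarrow> 'n \<Rightarrow> nat) \<Rightarrow> ('n \<Rightarrow> 'n \<Rightarrow> nat) \<Rightarrow> bool" where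
  "is_max_flow N src snk c f \<longleftrightarrow> is_flow N src snk c f \<and>
     (\<forall>g. is_flow N src snk c g \<longrightarrow> flow_value N src g \<le> flow_value N src f)"

end

theory Submission
  imports Defs
begin

lemma sumN:
  assumes "finite V"
  shows "(\<Sum>u\<in>net_nodes V. F u) = F Src + F Snk + (\<Sum>x\<in>V. F (Vx x))"
proof -
  have "net_nodes V = insert Src (insert Snk (Vx ` V))" unfolding net_nodes_def by auto
  moreover have "(\<Sum>u\<in>Vx ` V. F u) = (\<Sum>x\<in>V. F (Vx x))"
    by (rule sum.reindex_cong[where l=Vx]) (auto simp: inj_on_def)
  ultimately show ?thesis using assms by (simp add: image_iff add.assoc)
qed

lemma Z_fin: "finite V \<Longrightarrow> D \<subseteq> V \<Longrightarrow> finite (Zset D V E)"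
  by (rule finite_subset[of _ "V \<times> V"]) (auto simp: Zset_def)

lemma out_sum:
  assumes hle: "\<forall>a b. h a b \<le> net_cap V E s \<Delta> D a b" and "finite V" and "D \<subseteq> V"
  shows "(\<Sum>y\<in>V. h (Vx d) (Vx y)) =
     (\<Sum>p\<in>{p\<in>Zset D V E. fst p = d}. (\<lambda>(x,y). h (Vx x) (Vx y)) p)"
proof -
  have e: "{p\<in>Zset D V E. fst p = d} = Pair d ` {y\<in>V. (d,y)\<in>Zset D V E}"
    by (auto simp: Zset_def)
  have "(\<Sum>p\<in>{p\<in>Zset D V E. fst p = d}. (\<lambda>(x,y). h (Vx x) (Vx y)) p)
      = (\<Sum>y\<in>{y\<in>V. (d,y)\<in>Zset D V E}. h (Vx d) (Vx y))"
    unfolding e by (subst sum.reindex) (auto simp: inj_on_def)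
  also have "\<dots> = (\<Sum>y\<in>V. h (Vx d) (Vx y))"
  proof (rule sum.mono_neutral_left)
    show "\<forall>i\<in>V - {y \<in> V. (d, y) \<in> Zset D V E}. h (Vx d) (Vx i) = 0"
      using hle by (metis (no_types, lifting) DiffE le_zero_eq mem_Collect_eq net_cap.simps(3))
  qed (use assms in auto)
  finally show ?thesis by simp
qed

lemma in_sum:
  assumes hle: "\<forall>a b. h a b \<le> net_cap V E s \<Delta> D a b" and "finite V" and "D \<subseteq> V"
  shows "(\<Sum>x\<in>V. h (Vx x) (Vx v)) =
     (\<Sum>p\<in>{p\<in>Zset D V E. snd p = v}. (\<lambda>(x,y). h (Vx x) (Vx y)) p)"
proof -
  have e: "{p\<in>Zset D V E. snd p = v} = (\<lambda>x. (x,v)) ` {x\<in>V. (x,v)\<in>Zset D V E}"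
    using assms(3) by (auto simp: Zset_def image_iff)
  have "(\<Sum>p\<in>{p\<in>Zset D V E. snd p = v}. (\<lambda>(x,y). h (Vx x) (Vx y)) p)
      = (\<Sum>x\<in>{x\<in>V. (x,v)\<in>Zset D V E}. h (Vx x) (Vx v))"
    unfolding e by (subst sum.reindex) (auto simp: inj_on_def)
  also have "\<dots> = (\<Sum>x\<in>V. h (Vx x) (Vx v))"
  proof (rule sum.mono_neutral_left)
    show "\<forall>i\<in>V - {x \<in> V. (x, v) \<in> Zset D V E}. h (Vx i) (Vx v) = 0"
      using hle by (metis (no_types, lifting) DiffE le_zero_eq mem_Collect_eq net_cap.simps(3))
  qed (use assms in auto)
  finally show ?thesis by simp
qed

lemma cap0: "\<forall>a b. h a b \<le> (c::_\<Rightarrow>_\<Rightarrow>nat) a b \<Longrightarrow> c a b = 0 \<Longrightarrow> h a b = (0::nat)"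
  by (metis le_zero_eq)

lemma flow_facts:
  assumes fl: "is_flow (net_nodes V) Src Snk (net_cap V E s \<Delta> D) h"
    and fin: "finite V" and DV: "D \<subseteq> V"
  shows "\<forall>d\<in>D. h Src (Vx d) = (\<Sum>p\<in>{p\<in>Zset D V E. fst p = d}. (\<lambda>(x,y). h (Vx x) (Vx y)) p)"
    and "\<forall>v\<in>V-D. h (Vx v) Snk = (\<Sum>p\<in>{p\<in>Zset D V E. snd p = v}. (\<lambda>(x,y). h (Vx x) (Vx y)) p)"
    and "flow_value (net_nodes V) Src h = int (\<Sum>d\<in>D. h Src (Vx d))"
proof -
  have hle: "\<forall>a b. h a b \<le> net_cap V E s \<Delta> D a b" using fl by (simp add: is_flow_def)
  have cons: "\<And>v. v \<in> V \<Longrightarrow> (\<Sum>u\<in>net_nodes V. h u (Vx v)) = (\<Sum>w\<in>net_nodes V. h (Vx v) w)"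
    using fl unfolding is_flow_def net_nodes_def by auto
  have z1: "h a Src = 0" for a
    by (rule cap0[OF hle]) (cases a; simp)
  have z2: "h Snk b = 0" for b
    by (rule cap0[OF hle]) simp
  show "\<forall>d\<in>D. h Src (Vx d) = (\<Sum>p\<in>{p\<in>Zset D V E. fst p = d}. (\<lambda>(x,y). h (Vx x) (Vx y)) p)"
  proof
    fix d assume d: "d \<in> D"
    have a: "\<And>x. h (Vx x) (Vx d) = 0"
      by (rule cap0[OF hle]) (use d in \<open>simp add: Zset_def\<close>)
    have b: "h (Vx d) Snk = 0" by (rule cap0[OF hle]) (use d in simp)
    have "h Src (Vx d) = (\<Sum>y\<in>V. h (Vx d) (Vx y))"
      using cons[of d] d DV by (auto simp: sumN[OF fin] a b z1 z2)
    then show "h Src (Vx d) = (\<Sum>p\<in>{p\<in>Zset D V E. fst p = d}. (\<lambda>(x,y). h (Vx x) (Vx y)) p)"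
      using out_sum[OF hle fin DV] by simp
  qed
  show "\<forall>v\<in>V-D. h (Vx v) Snk = (\<Sum>p\<in>{p\<in>Zset D V E. snd p = v}. (\<lambda>(x,y). h (Vx x) (Vx y)) p)"
  proof
    fix v assume v: "v \<in> V - D"
    have a: "\<And>y. h (Vx v) (Vx y) = 0"
      by (rule cap0[OF hle]) (use v in \<open>simp add: Zset_def\<close>)
    have b: "h Src (Vx v) = 0" by (rule cap0[OF hle]) (use v in simp)
    have "h (Vx v) Snk = (\<Sum>x\<in>V. h (Vx x) (Vx v))"
      using cons[of v] v by (auto simp: sumN[OF fin] a b z1 z2)
    then show "h (Vx v) Snk = (\<Sum>p\<in>{p\<in>Zset D V E. snd p = v}. (\<lambda>(x,y). h (Vx x) (Vx y)) p)"
      using in_sum[OF hle fin DV] by simp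
  qed
  have "(\<Sum>v\<in>V. h Src (Vx v)) = (\<Sum>d\<in>D. h Src (Vx d))"
  proof (rule sum.mono_neutral_right[OF fin DV])
    show "\<forall>i\<in>V - D. h Src (Vx i) = 0" using hle by (metis DiffD2 cap0 net_cap.simps(1))
  qed
    moreover have "h Src Snk = 0" by (rule cap0[OF hle]) simp
    ultimately show "flow_value (net_nodes V) Src h = int (\<Sum>d\<in>D. h Src (Vx d))"
    unfolding flow_value_def by (simp add: sumN[OF fin] z1 z2)
qed

lemma double:
  assumes "finite V" "D \<subseteq> V"
  shows "(\<Sum>d\<in>D. \<Sum>p\<in>{p\<in>Zset D V E. fst p = d}. F p) = (\<Sum>p\<in>Zset D V E. F p)"
    and "(\<Sum>v\<in>V-D. \<Sum>p\<in>{p\<in>Zset D V E. snd p = v}. F p) = (\<Sum>p\<in>Zset D V E. F p)"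
proof -
  have fD: "finite D" using assms finite_subset by blast
  show "(\<Sum>d\<in>D. \<Sum>p\<in>{p\<in>Zset D V E. fst p = d}. F p) = (\<Sum>p\<in>Zset D V E. F p)"
    by (rule sum.group[OF Z_fin[OF assms(1) assms(2)] fD]) (auto simp: Zset_def)
  show "(\<Sum>v\<in>V-D. \<Sum>p\<in>{p\<in>Zset D V E. snd p = v}. F p) = (\<Sum>p\<in>Zset D V E. F p)"
    by (rule sum.group[OF Z_fin[OF assms(1) assms(2)]]) (use assms in \<open>auto simp: Zset_def\<close>)
qed

theorem corollary1:
  fixes V :: "'a set" and E :: "'a set set" and s \<Delta> :: nat and D :: "'a set"
  assumes "ugraph V E" and "0 < s" and "0 < \<Delta>" and "D \<subset> V"
    and "\<exists>z. is_dissolution V E s \<Delta> D z"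
  shows "card (net_nodes V) = card V + 2
    \<and> card (net_arcs V E s \<Delta> D) \<le> card E + 2 * card V
    \<and> (\<forall>(a, b)\<in>net_arcs V E s \<Delta> D. net_cap V E s \<Delta> D a b \<in> {s, \<Delta>})
    \<and> (\<forall>f. is_max_flow (net_nodes V) Src Snk (net_cap V E s \<Delta> D) f \<longrightarrow>
          is_dissolution V E s \<Delta> D (\<lambda>(x, y). f (Vx x) (Vx y)))"
proof -
  have fin: "finite V" using assms(1) by (simp add: ugraph_def)
  have DV: "D \<subseteq> V" using assms(4) by blast
  have fD: "finite D" using fin DV finite_subset by blast
  let ?Z = "Zset D V E"
  let ?c = "net_cap V E s \<Delta> D"
  let ?N = "net_nodes V"
  have fZ: "finite ?Z" by (rule Z_fin[OF fin DV])
  have P1: "card ?N = card V + 2"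
  proof -
    have "?N = insert Src (insert Snk (Vx ` V))" unfolding net_nodes_def by auto
    moreover have "card (Vx ` V) = card V" by (rule card_image) (auto simp: inj_on_def)
    moreover have "Src \<notin> insert Snk (Vx ` V)" "Snk \<notin> Vx ` V" by auto
    ultimately show ?thesis using fin by (simp add: card_insert_disjoint)
  qed
  have fE: "finite E"
  proof (rule finite_subset[of _ "Pow V"])
    show "E \<subseteq> Pow V"
    proof
      fix e assume "e \<in> E"
      then obtain x y where "x \<in> V" "y \<in> V" "e = {x,y}" using assms(1) unfolding ugraph_def by blast
      then show "e \<in> Pow V" by simp
    qed
  qed (use fin in simp)
  have cZ: "card ?Z \<le> card E"
  proof (rule card_inj_on_le[where f="\<lambda>(x,y). {x,y}"])
    show "inj_on (\<lambda>(x, y). {x, y}) ?Z"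
      unfolding inj_on_def Zset_def by (auto simp: doubleton_eq_iff)
    show "(\<lambda>(x, y). {x, y}) ` ?Z \<subseteq> E" unfolding Zset_def by auto
  qed (rule fE)
  have P2: "card (net_arcs V E s \<Delta> D) \<le> card E + 2 * card V"
  proof -
    let ?A1 = "(\<lambda>d. (Src :: 'a fnode, Vx d)) ` D"
    let ?A2 = "(\<lambda>(x,y). (Vx x, Vx y)) ` ?Z"
    let ?A3 = "(\<lambda>v. (Vx v, Snk :: 'a fnode)) ` (V - D)"
    have sub: "net_arcs V E s \<Delta> D \<subseteq> ?A1 \<union> ?A2 \<union> ?A3"
    proof
      fix p assume "p \<in> net_arcs V E s \<Delta> D"
      then obtain a b where p: "p = (a,b)" "0 < ?c a b" unfolding net_arcs_def by auto
      show "p \<in> ?A1 \<union> ?A2 \<union> ?A3"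
      proof (cases a)
        case Src
        then obtain v where "b = Vx v" "v \<in> D" using p
          by (cases b) (simp_all split: if_splits)
        then show ?thesis using p Src by blast
      next
        case Snk then show ?thesis using p by simp
      next
        case (Vx x)
        show ?thesis
        proof (cases b)
          case Src then show ?thesis using p Vx by simp
        next
          case Snk
          then have "x \<in> V - D" using p Vx by (simp split: if_splits)
          then show ?thesis using p Vx Snk by blast
        next
          case (Vx y)
          then have "(x,y) \<in> ?Z" using p \<open>a = Vx x\<close> by (simp split: if_splits)
          then have "(Vx x, Vx y) \<in> ?A2" by (rule rev_image_eqI) simp
          then show ?thesis using p Vx \<open>a = Vx x\<close> by simp
        qed
      qed
    qed
    have "card (net_arcs V E s \<Delta> D) \<le> card (?A1 \<union> ?A2 \<union> ?A3)"
      by (rule card_mono[OF _ sub]) (use fD fZ fin in auto)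
    also have "\<dots> \<le> card ?A1 + card ?A2 + card ?A3"
    proof -
      have "card (?A1 \<union> ?A2 \<union> ?A3) \<le> card (?A1 \<union> ?A2) + card ?A3" using card_Un_le[of "?A1 \<union> ?A2" ?A3] .
      moreover have "card (?A1 \<union> ?A2) \<le> card ?A1 + card ?A2" by (rule card_Un_le)
      ultimately show ?thesis by simp
    qed
    also have "\<dots> \<le> card D + card ?Z + card (V - D)"
      by (intro add_mono card_image_le) (use fD fZ fin in auto)
    also have "card (V - D) \<le> card V" using fin by (simp add: card_mono)
    also have "card D \<le> card V" using fin DV by (simp add: card_mono)
    finally show ?thesis using cZ by linarith
  qed
  have P3: "\<forall>(a, b)\<in>net_arcs V E s \<Delta> D. ?c a b \<in> {s, \<Delta>}"
  proof -
    have "?c a b \<in> {s, \<Delta>}" if "0 < ?c a b" for a b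
      using that by (cases a; cases b) (auto split: if_splits)
    then show ?thesis unfolding net_arcs_def by auto
  qed
  obtain z where z: "is_dissolution V E s \<Delta> D z" using assms(5) by blast
  have zle: "\<forall>p\<in>?Z. z p \<le> s" using z by (simp add: is_dissolution_def)
  define g where "g a b = (case (a, b) of (Vx x, Vx y) \<Rightarrow> (if (x,y) \<in> ?Z then z (x,y) else 0)
     | _ \<Rightarrow> ?c a b)" for a b
  have gc: "\<forall>a b. g a b \<le> ?c a b"
  proof (intro allI)
    fix a b show "g a b \<le> ?c a b"
      using zle unfolding g_def by (cases a; cases b) auto
  qed
  have gdis: "(\<lambda>(x,y). g (Vx x) (Vx y)) p = z p" if "p \<in> ?Z" for p
    using that by (cases p) (simp add: g_def)
  have gflow: "is_flow ?N Src Snk ?c g"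
    unfolding is_flow_def
  proof (intro conjI)
    show "\<forall>a b. g a b \<le> ?c a b" by (rule gc)
    show "\<forall>a b. a \<notin> ?N \<or> b \<notin> ?N \<longrightarrow> g a b = 0"
    proof (intro allI impI)
      fix a b assume "a \<notin> ?N \<or> b \<notin> ?N"
      then have "?c a b = 0" using DV
        by (cases a; cases b) (auto simp: net_nodes_def Zset_def)
      then show "g a b = 0" using gc by (metis le_zero_eq)
    qed
    show "\<forall>v\<in>?N - {Src, Snk}. (\<Sum>u\<in>?N. g u v) = (\<Sum>w\<in>?N. g v w)"
    proof
      fix v assume "v \<in> ?N - {Src, Snk}"
      then obtain x where v: "v = Vx x" "x \<in> V" unfolding net_nodes_def by auto
      have z1: "g a Src = 0" for a by (rule cap0[OF gc]) (cases a; simp)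
      have z2: "g Snk b = 0" for b by (rule cap0[OF gc]) simp
      show "(\<Sum>u\<in>?N. g u v) = (\<Sum>w\<in>?N. g v w)"
      proof (cases "x \<in> D")
        case True
        have a: "g (Vx y) (Vx x) = 0" for y
          by (rule cap0[OF gc]) (use True in \<open>simp add: Zset_def\<close>)
        have b: "g (Vx x) Snk = 0" by (rule cap0[OF gc]) (use True in simp)
        have "(\<Sum>y\<in>V. g (Vx x) (Vx y)) = (\<Sum>p\<in>{p\<in>?Z. fst p = x}. z p)"
          using out_sum[OF gc fin DV, of x] gdis by simp
        also have "\<dots> = s" using z True by (simp add: is_dissolution_def)
        finally show ?thesis using True v
          by (simp add: sumN[OF fin] a b z1 z2, simp add: g_def)
      next
        case False
        have a: "g (Vx x) (Vx y) = 0" for y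
          by (rule cap0[OF gc]) (use False in \<open>simp add: Zset_def\<close>)
        have b: "g Src (Vx x) = 0" by (rule cap0[OF gc]) (use False in simp)
        have "(\<Sum>y\<in>V. g (Vx y) (Vx x)) = (\<Sum>p\<in>{p\<in>?Z. snd p = x}. z p)"
          using in_sum[OF gc fin DV, of x] gdis by simp
        also have "\<dots> = \<Delta>" using z False v by (simp add: is_dissolution_def)
        finally show ?thesis using False v
          by (simp add: sumN[OF fin] a b z1 z2, simp add: g_def)
      qed
    qed
  qed
  have gval: "flow_value ?N Src g = int (s * card D)"
  proof -
    have "flow_value ?N Src g = int (\<Sum>d\<in>D. g Src (Vx d))"
      by (rule flow_facts(3)[OF gflow fin DV])
    also have "(\<Sum>d\<in>D. g Src (Vx d)) = (\<Sum>d\<in>D. s)"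
      by (rule sum.cong) (auto simp: g_def)
    finally show ?thesis by simp
  qed
  have zsum: "s * card D = \<Delta> * card (V - D)"
  proof -
    have "s * card D = (\<Sum>d\<in>D. \<Sum>p\<in>{p\<in>?Z. fst p = d}. z p)"
      using z unfolding is_dissolution_def by simp
    also have "\<dots> = (\<Sum>p\<in>?Z. z p)" by (rule double(1)[OF fin DV])
    also have "\<dots> = (\<Sum>v\<in>V-D. \<Sum>p\<in>{p\<in>?Z. snd p = v}. z p)" by (rule double(2)[OF fin DV, symmetric])
    also have "\<dots> = \<Delta> * card (V - D)"
      using z unfolding is_dissolution_def by simp
    finally show ?thesis .
  qed
  have P4: "is_dissolution V E s \<Delta> D (\<lambda>(x, y). f (Vx x) (Vx y))"
    if mf: "is_max_flow ?N Src Snk ?c f" for f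
  proof -
    have ff: "is_flow ?N Src Snk ?c f" using mf by (simp add: is_max_flow_def)
    have fc: "\<forall>a b. f a b \<le> ?c a b" using ff by (simp add: is_flow_def)
    let ?F = "\<lambda>(x, y). f (Vx x) (Vx y)"
    have "flow_value ?N Src g \<le> flow_value ?N Src f" using mf gflow by (simp add: is_max_flow_def)
    then have ge: "(\<Sum>d\<in>D. s) \<le> (\<Sum>d\<in>D. f Src (Vx d))"
    proof -
      have "int (s * card D) \<le> int (\<Sum>d\<in>D. f Src (Vx d))"
        using \<open>flow_value ?N Src g \<le> flow_value ?N Src f\<close> gval flow_facts(3)[OF ff fin DV] by linarith
      then show ?thesis by (simp only: of_nat_le_iff) (simp add: mult.commute)
    qed
    have le1: "f Src (Vx d) \<le> s" if "d \<in> D" for d using fc that by (metis net_cap.simps(1))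
    have src: "f Src (Vx d) = s" if "d \<in> D" for d
    proof (rule antisym[OF le1[OF that]])
      have "(\<Sum>d\<in>D. f Src (Vx d)) = (\<Sum>d\<in>D. s)"
        using ge sum_mono[of D "\<lambda>d. f Src (Vx d)" "\<lambda>d. s"] le1 by (meson antisym)
      then show "s \<le> f Src (Vx d)"
        using sum_mono_inv[of "\<lambda>d. f Src (Vx d)" D "\<lambda>d. s" d] le1 that fD by simp
    qed
    have le2: "f (Vx v) Snk \<le> \<Delta>" if "v \<in> V - D" for v using fc that by (metis net_cap.simps(2))
    have sumsnk: "(\<Sum>v\<in>V-D. f (Vx v) Snk) = (\<Sum>v\<in>V-D. \<Delta>)"
    proof -
      have "(\<Sum>v\<in>V-D. f (Vx v) Snk) = (\<Sum>v\<in>V-D. \<Sum>p\<in>{p\<in>?Z. snd p = v}. ?F p)"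
        using flow_facts(2)[OF ff fin DV] by simp
      also have "\<dots> = (\<Sum>p\<in>?Z. ?F p)" by (rule double(2)[OF fin DV])
      also have "\<dots> = (\<Sum>d\<in>D. \<Sum>p\<in>{p\<in>?Z. fst p = d}. ?F p)" by (rule double(1)[OF fin DV, symmetric])
      also have "\<dots> = (\<Sum>d\<in>D. f Src (Vx d))"
        using flow_facts(1)[OF ff fin DV] by simp
      also have "\<dots> = s * card D" using src by simp
      finally show ?thesis using zsum by (simp add: mult.commute)
    qed
    have snk: "f (Vx v) Snk = \<Delta>" if "v \<in> V - D" for v
      by (rule sum_mono_inv[OF sumsnk]) (use le2 that fin in auto)
    show ?thesis unfolding is_dissolution_def
    proof (intro conjI ballI)
      show "D \<subset> V" by (rule assms(4))
      fix p assume "p \<in> ?Z"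
      then show "?F p \<le> s" using fc by (cases p) (metis case_prod_conv net_cap.simps(3))
    next
      fix d assume "d \<in> D"
      then show "(\<Sum>p\<in>{p \<in> ?Z. fst p = d}. ?F p) = s"
        using flow_facts(1)[OF ff fin DV] src by simp
    next
      fix v assume "v \<in> V - D"
      then show "(\<Sum>p\<in>{p \<in> ?Z. snd p = v}. ?F p) = \<Delta>"
        using flow_facts(2)[OF ff fin DV] snk by simp
    qed
  qed
  show ?thesis using P1 P2 P3 by (intro conjI allI impI P4) simp_all
qed

end
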